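(* Fix $C_1,C_2$ with $C_2\ge C_1>0$, and fix $C_3\in(0,C_{3,crit})$. Then $\mathfrak L(C_1,C_2,C_3,b)$ is strictly increasing in $b$ on $(b_-(C_3),b_+(C_3))$.
   Context: Let real constants $C_1,C_2$ be given with $2C_1+C_2>0$, and let $C_{3,crit}=\frac1{27}(2C_1+C_2)^3$. For $C_3\in(0,C_{3,crit})$, let $\phi_1<\phi_2<\phi_3$ be the roots of $2(\phi-C_1)^2(\phi+\frac{C_2}2)=C_3$; they satisfy $-\frac{C_2}{2}<\phi_1<\frac{C_1-C_2}{3}<\phi_2<C_1<\phi_3$. Let $U(\phi)=-\frac12\phi^2-\frac12C_2\phi-\frac12C_1C_2-\frac{C_3}{2(\phi-C_1)}$. Set $b_-(C_3)=U(\phi_2)$ and $b_+(C_3)=U(\phi_1)$. For $b\in(b_-(C_3),b_+(C_3))$, let $\phi_-<\phi_+$ be the two solutions of $U(\phi)=b$ with $\phi_1<\phi_-<\phi_2<\phi_+<C_1$. Define $$\mathfrak L(C_1,C_2,C_3,b)=2\int_{\phi_-}^{\phi_+}\frac{d\phi}{\sqrt{2(b-U(\phi))}}.$$ This is the period of the periodic orbit of $\frac12\dot\phi^2+U(\phi)=b$, which describes travelling waves of the DGH equation. *)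

theory Defs
  imports "HOL-Analysis.Analysis"
begin

definition C3crit :: "real \<Rightarrow> real \<Rightarrow> real" where
  "C3crit C1 C2 = (2*C1 + C2)^3 / 27"

definition cubicF :: "real \<Rightarrow> real \<Rightarrow> real \<Rightarrow> real" where
  "cubicF C1 C2 \<phi> = 2 * (\<phi> - C1)^2 * (\<phi> + C2/2)"

definition phi1 :: "real \<Rightarrow> real \<Rightarrow> real \<Rightarrow> real" where
  "phi1 C1 C2 C3 = (THE \<phi>. cubicF C1 C2 \<phi> = C3 \<and> \<phi> < (C1 - C2)/3)"

definition phi2 :: "real \<Rightarrow> real \<Rightarrow> real \<Rightarrow> real" where
  "phi2 C1 C2 C3 = (THE \<phi>. cubicF C1 C2 \<phi> = C3 \<and> (C1 - C2)/3 < \<phi> \<and> \<phi> < C1)"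

definition U :: "real \<Rightarrow> real \<Rightarrow> real \<Rightarrow> real \<Rightarrow> real" where
  "U C1 C2 C3 \<phi> = - (1/2) * \<phi>^2 - (1/2) * C2 * \<phi> - (1/2) * C1 * C2 - C3 / (2 * (\<phi> - C1))"

definition bminus :: "real \<Rightarrow> real \<Rightarrow> real \<Rightarrow> real" where
  "bminus C1 C2 C3 = U C1 C2 C3 (phi2 C1 C2 C3)"

definition bplus :: "real \<Rightarrow> real \<Rightarrow> real \<Rightarrow> real" where
  "bplus C1 C2 C3 = U C1 C2 C3 (phi1 C1 C2 C3)"

definition phiminus :: "real \<Rightarrow> real \<Rightarrow> real \<Rightarrow> real \<Rightarrow> real" where
  "phiminus C1 C2 C3 b =
     (THE \<phi>. U C1 C2 C3 \<phi> = b \<and> phi1 C1 C2 C3 < \<phi> \<and> \<phi> < phi2 C1 C2 C3)"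

definition phiplus :: "real \<Rightarrow> real \<Rightarrow> real \<Rightarrow> real \<Rightarrow> real" where
  "phiplus C1 C2 C3 b =
     (THE \<phi>. U C1 C2 C3 \<phi> = b \<and> phi2 C1 C2 C3 < \<phi> \<and> \<phi> < C1)"

text \<open>The period: 2 * integral of 1/sqrt(2(b - U)) over [phi_-, phi_+]
  (an improper integral with integrable endpoint singularities; the
  Henstock-Kurzweil integral covers it).\<close>
definition periodL :: "real \<Rightarrow> real \<Rightarrow> real \<Rightarrow> real \<Rightarrow> real" where
  "periodL C1 C2 C3 b =
     2 * integral {phiminus C1 C2 C3 b .. phiplus C1 C2 C3 b}
           (\<lambda>\<phi>. 1 / sqrt (2 * (b - U C1 C2 C3 \<phi>)))"

end

theory Submission
  imports Defs
begin


definition hh :: "real \<Rightarrow> real" where "hh y = y^2*(1-y)"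

lemma hh_diff: "hh y - hh z = (y - z) * (y + z - y^2 - y*z - z^2)"
  unfolding hh_def by (simp add: algebra_simps power2_eq_square)

lemma hh_uniq_hi:
  assumes "2/3 < y" "2/3 < z" "hh y = hh z" shows "y = z"
proof (rule ccontr)
  assume ne: "y \<noteq> z"
  from hh_diff[of y z] assms(3) ne have e: "y + z - y^2 - y*z - z^2 = 0" by simp
  have "y*(y+z/2-1) + z*(z+y/2-1) > 0"
    using assms(1,2) by (intro add_pos_pos mult_pos_pos) auto
  with e show False by (simp add: algebra_simps power2_eq_square)
qed

lemma hh_uniq_lo:
  assumes "0 < y" "y < 2/3" "0 < z" "z < 2/3" "hh y = hh z" shows "y = z"
proof (rule ccontr)
  assume ne: "y \<noteq> z"
  from hh_diff[of y z] assms(5) ne have e: "y + z - y^2 - y*z - z^2 = 0" by simp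
  have "y*(1-y-z/2) + z*(1-z-y/2) > 0"
    using assms(1-4) by (intro add_pos_pos mult_pos_pos) auto
  with e show False by (simp add: algebra_simps power2_eq_square)
qed

lemma hh_cont: "isCont hh x" unfolding hh_def by simp

lemma hh_root_hi:
  assumes "0 < c" "c < 4/27" shows "\<exists>q. 2/3 < q \<and> q < 1 \<and> hh q = c"
proof -
  have "\<exists>x\<ge>2/3. x \<le> 1 \<and> hh x = c"
    by (rule IVT2) (use assms in \<open>auto simp: hh_def hh_cont power2_eq_square\<close>)
  then obtain x where "2/3 \<le> x" "x \<le> 1" "hh x = c" by blast
  moreover have "x \<noteq> 2/3"
  proof
    assume "x = 2/3" with \<open>hh x = c\<close> have "c = 4/27" by (simp add: hh_def power2_eq_square)
    with assms show False by simp
  qed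
  moreover have "x \<noteq> 1" using assms \<open>hh x = c\<close> by (auto simp: hh_def power2_eq_square)
  ultimately show ?thesis by (intro exI[of _ x]) auto
qed

lemma hh_root_lo:
  assumes "0 < c" "c < 4/27" shows "\<exists>p. 0 < p \<and> p < 2/3 \<and> hh p = c"
proof -
  have "\<exists>x\<ge>0. x \<le> 2/3 \<and> hh x = c"
    by (rule IVT) (use assms in \<open>auto simp: hh_def hh_cont power2_eq_square\<close>)
  then obtain x where "0 \<le> x" "x \<le> 2/3" "hh x = c" by blast
  moreover have "x \<noteq> 2/3"
  proof
    assume "x = 2/3" with \<open>hh x = c\<close> have "c = 4/27" by (simp add: hh_def power2_eq_square)
    with assms show False by simp
  qed
  moreover have "x \<noteq> 0" using assms \<open>hh x = c\<close> by (auto simp: hh_def power2_eq_square)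
  ultimately show ?thesis by (intro exI[of _ x]) auto
qed


locale dgh =
  fixes C1 C2 C3 :: real
  assumes C1pos: "0 < C1" and C12: "C1 \<le> C2" and C3pos: "0 < C3" and C3lt: "C3 < C3crit C1 C2"
begin

definition "a = C1 + C2/2"
definition "cc = C3 / (2*a^3)"
definition "yv \<phi> = (C1 - \<phi>) / a"

lemma a_pos: "0 < a" using C1pos C12 by (simp add: a_def)

lemma cc_pos: "0 < cc" using a_pos C3pos by (simp add: cc_def)

lemma cc_lt: "cc < 4/27"
proof -
  have e: "2*C1 + C2 = 2*a" by (simp add: a_def)
  have "C3crit C1 C2 = 8*a^3/27" unfolding C3crit_def e by (simp add: power_mult_distrib)
  with C3lt have "C3 < 8*a^3/27" by simp
  thus ?thesis using a_pos by (simp add: cc_def field_simps)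
qed


lemma cubic_y: "cubicF C1 C2 \<phi> = 2*a^3*hh (yv \<phi>)"
proof -
  have "cubicF C1 C2 \<phi> = 2*(C1-\<phi>)^2*(a - (C1-\<phi>))" unfolding cubicF_def a_def
    by (simp add: power2_eq_square algebra_simps)
  moreover have "2*a^3*hh (yv \<phi>) = 2*(C1-\<phi>)^2*(a - (C1-\<phi>))"
    using a_pos unfolding hh_def yv_def by (simp add: field_simps power2_eq_square power3_eq_cube)
  ultimately show ?thesis by simp
qed

lemma yv_inj: "yv x = yv z \<Longrightarrow> x = z" using a_pos by (simp add: yv_def)

lemma yv_inv: "yv (C1 - a*y) = y" using a_pos by (simp add: yv_def)

lemma m0_iff: "(C1 - C2)/3 < \<phi> \<longleftrightarrow> yv \<phi> < 2/3"
  using a_pos by (simp add: yv_def a_def field_simps; arith)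
lemma m0_iff': "\<phi> < (C1 - C2)/3 \<longleftrightarrow> 2/3 < yv \<phi>"
  using a_pos by (simp add: yv_def a_def field_simps; arith)
lemma C1_iff: "\<phi> < C1 \<longleftrightarrow> 0 < yv \<phi>"
  using a_pos by (simp add: yv_def field_simps)

lemma cubic_eq_iff: "cubicF C1 C2 \<phi> = C3 \<longleftrightarrow> hh (yv \<phi>) = cc"
  using a_pos by (auto simp: cubic_y cc_def field_simps)

definition "p = yv (phi2 C1 C2 C3)"
definition "q = yv (phi1 C1 C2 C3)"

lemma phi2_props: "0 < p" "p < 2/3" "hh p = cc" "(C1 - C2)/3 < phi2 C1 C2 C3" "phi2 C1 C2 C3 < C1"
    "cubicF C1 C2 (phi2 C1 C2 C3) = C3"
proof -
  obtain p0 where p0: "0 < p0" "p0 < 2/3" "hh p0 = cc" using hh_root_lo[OF cc_pos cc_lt] by blast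
  have "phi2 C1 C2 C3 = C1 - a*p0"
    unfolding phi2_def
  proof (rule the_equality)
    show "cubicF C1 C2 (C1 - a * p0) = C3 \<and> (C1 - C2) / 3 < C1 - a * p0 \<and> C1 - a * p0 < C1"
      using p0 m0_iff[of "C1 - a*p0"] C1_iff[of "C1 - a*p0"] cubic_eq_iff[of "C1 - a*p0"] yv_inv[of p0] by simp
  next
    fix \<phi> assume h: "cubicF C1 C2 \<phi> = C3 \<and> (C1 - C2) / 3 < \<phi> \<and> \<phi> < C1"
    have h1: "hh (yv \<phi>) = cc" using h cubic_eq_iff[of \<phi>] by simp
    have h2: "yv \<phi> < 2/3" using h m0_iff[of \<phi>] by simp
    have h3: "0 < yv \<phi>" using h C1_iff[of \<phi>] by simp
    have "yv \<phi> = p0" using hh_uniq_lo[OF h3 h2 p0(1) p0(2)] h1 p0(3) by simp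
    thus "\<phi> = C1 - a * p0" using yv_inj[of \<phi> "C1 - a*p0"] yv_inv[of p0] by simp
  qed
  hence pe: "p = p0" by (simp add: p_def yv_inv)
  show "0 < p" "p < 2/3" "hh p = cc" using p0 pe by auto
  show "(C1 - C2)/3 < phi2 C1 C2 C3" "phi2 C1 C2 C3 < C1" "cubicF C1 C2 (phi2 C1 C2 C3) = C3"
    using p0 pe m0_iff[of "phi2 C1 C2 C3"] C1_iff[of "phi2 C1 C2 C3"] cubic_eq_iff[of "phi2 C1 C2 C3"] by (auto simp: p_def)
qed

lemma phi1_props: "2/3 < q" "q < 1" "hh q = cc" "phi1 C1 C2 C3 < (C1 - C2)/3"
    "cubicF C1 C2 (phi1 C1 C2 C3) = C3"
proof -
  obtain q0 where q0: "2/3 < q0" "q0 < 1" "hh q0 = cc" using hh_root_hi[OF cc_pos cc_lt] by blast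
  have "phi1 C1 C2 C3 = C1 - a*q0"
    unfolding phi1_def
  proof (rule the_equality)
    show "cubicF C1 C2 (C1 - a * q0) = C3 \<and> C1 - a * q0 < (C1 - C2) / 3"
      using q0 m0_iff'[of "C1 - a*q0"] cubic_eq_iff[of "C1 - a*q0"] yv_inv[of q0] by simp
  next
    fix \<phi> assume h: "cubicF C1 C2 \<phi> = C3 \<and> \<phi> < (C1 - C2) / 3"
    have h1: "hh (yv \<phi>) = cc" using h cubic_eq_iff[of \<phi>] by simp
    have h2: "2/3 < yv \<phi>" using h m0_iff'[of \<phi>] by simp
    have "yv \<phi> = q0" using hh_uniq_hi[OF h2 q0(1)] h1 q0(3) by simp
    thus "\<phi> = C1 - a * q0" using yv_inj[of \<phi> "C1 - a*q0"] yv_inv[of q0] by simp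
  qed
  hence pe: "q = q0" by (simp add: q_def yv_inv)
  show "2/3 < q" "q < 1" "hh q = cc" using q0 pe by auto
  show "phi1 C1 C2 C3 < (C1 - C2)/3" "cubicF C1 C2 (phi1 C1 C2 C3) = C3"
    using q0 pe m0_iff'[of "phi1 C1 C2 C3"] cubic_eq_iff[of "phi1 C1 C2 C3"] by (auto simp: q_def)
qed

abbreviation "ph1 \<equiv> phi1 C1 C2 C3"
abbreviation "ph2 \<equiv> phi2 C1 C2 C3"
abbreviation "UU \<equiv> U C1 C2 C3"

lemma p_lt_q: "p < q" using phi1_props phi2_props by simp
lemma ph_order: "ph1 < ph2" "ph2 < C1"
  using phi1_props(4) phi2_props(4,5) by auto

definition "Qp y = p + y - p^2 - p*y - y^2"

lemma Qp_q: "Qp q = 0"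
proof -
  have "hh q - hh p = (q - p) * Qp q" unfolding hh_diff Qp_def by (simp add: algebra_simps)
  thus ?thesis using phi1_props(3) phi2_props(3) p_lt_q by simp
qed

lemma pq_sum: "1 < p + q"
proof -
  have "(p+q)*(p+q-1) - p*q = - Qp q" by (simp add: Qp_def algebra_simps power2_eq_square)
  hence "(p+q)*(p+q-1) = p*q" using Qp_q by simp
  moreover have "p*q > 0" using phi2_props(1) p_lt_q by simp
  ultimately have "(p+q)*(p+q-1) > 0" by simp
  moreover have "p + q > 0" using phi2_props(1) p_lt_q by simp
  ultimately show ?thesis by (simp add: zero_less_mult_iff)
qed

lemma Qp_fact: "Qp y = (q - y) * (y - (1 - p - q))"
proof -
  have "Qp y - (q - y) * (y - (1 - p - q)) = Qp q" by (simp add: Qp_def algebra_simps power2_eq_square)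
  thus ?thesis using Qp_q by simp
qed

lemma Qp_pos: "0 \<le> y \<Longrightarrow> y < q \<Longrightarrow> 0 < Qp y"
  using pq_sum by (simp add: Qp_fact)

lemma q_lt: "q < 2 - 2*p"
proof -
  have "Qp (2 - 2*p) = - ((2 - 3*p) * (1-p))" by (simp add: Qp_def algebra_simps power2_eq_square)
  moreover have "(2 - 3*p) * (1-p) > 0" using phi2_props by simp
  ultimately have "Qp (2-2*p) < 0" by simp
  hence "(q - (2-2*p)) * ((2-2*p) - (1 - p - q)) < 0" by (simp add: Qp_fact)
  moreover have "(2-2*p) - (1 - p - q) > 0" using phi2_props p_lt_q by simp
  ultimately show ?thesis by (simp add: mult_less_0_iff)
qed

lemma cc_p: "cc = p^2*(1-p)" using phi2_props(3) by (simp add: hh_def)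

definition "K0 = -(C1*C1)/2 - C1*C2"

lemma U_x: "x \<noteq> 0 \<Longrightarrow> UU (C1 - x) = K0 + a*x - x^2/2 + C3/(2*x)"
proof -
  have e1: "C3 / (2 * (C1 - x - C1)) = - (C3/(2*x))" by simp
  have "UU (C1-x) = -(1/2)*(C1-x)^2 - (1/2)*C2*(C1-x) - (1/2)*C1*C2 + C3/(2*x)"
    unfolding U_def e1 by simp
  moreover have "-(1/2)*(C1-x)^2 - (1/2)*C2*(C1-x) - (1/2)*C1*C2 = K0 + a*x - x^2/2"
    unfolding K0_def a_def by (simp add: field_simps power2_eq_square)
  ultimately show ?thesis by simp
qed

lemma U_y: "\<phi> \<noteq> C1 \<Longrightarrow> UU \<phi> = K0 + a^2 * (yv \<phi> - (yv \<phi>)^2/2 + cc / yv \<phi>)"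
proof -
  assume h: "\<phi> \<noteq> C1"
  define x where "x = C1 - \<phi>"
  have x: "x \<noteq> 0" using h x_def by simp
  have e: "\<phi> = C1 - x" using x_def by simp
  have yx: "yv \<phi> = x / a" unfolding yv_def x_def ..
  have t1: "a^2 * (x/a) = a*x" using a_pos by (simp add: power2_eq_square)
  have t2: "a^2 * ((x/a)^2/2) = x^2/2" using a_pos by (simp add: power2_eq_square)
  have t3: "a^2 * (C3/(2*a^3) / (x/a)) = C3/(2*x)" using a_pos x by (simp add: power2_eq_square power3_eq_cube)
  have "a^2 * (yv \<phi> - (yv \<phi>)^2/2 + cc / yv \<phi>) = a^2 * (x/a) - a^2 * ((x/a)^2/2) + a^2 * (C3/(2*a^3) / (x/a))"
    unfolding yx cc_def by (simp add: algebra_simps)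
  also have "\<dots> = a*x - x^2/2 + C3/(2*x)" unfolding t1 t2 t3 ..
  finally show ?thesis using U_x[OF x] e by simp
qed

lemma U_diff: "\<phi> < C1 \<Longrightarrow> UU \<phi> - UU ph2 = a^2 * (yv \<phi> - p)^2 * (2 - yv \<phi> - 2*p) / (2 * yv \<phi>)"
proof -
  assume h: "\<phi> < C1"
  define y where "y = yv \<phi>"
  have y: "0 < y" using h C1_iff y_def by simp
  have p: "0 < p" using phi2_props by simp
  have "UU \<phi> - UU ph2 = a^2 * ((y - y^2/2 + cc/y) - (p - p^2/2 + cc/p))"
    using U_y[of \<phi>] U_y[of ph2] h ph_order by (simp add: y_def p_def algebra_simps)
  also have "\<dots> = a^2 * (y - p)^2 * (2 - y - 2*p) / (2 * y)"
    using y p unfolding cc_p by (simp add: field_simps power2_eq_square; simp add: algebra_simps)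
  finally show ?thesis by (simp add: y_def)
qed

definition "Ud \<phi> = - \<phi> - C2/2 + (C3/2) * (inverse (\<phi> - C1))^2"

lemma eqU: "UU = (\<lambda>\<phi>. -(1/2)*\<phi>^2 - (1/2)*C2*\<phi> - (1/2)*C1*C2 - (C3/2) * inverse (\<phi> - C1))"
proof (rule ext)
  fix \<phi> show "UU \<phi> = -(1/2)*\<phi>^2 - (1/2)*C2*\<phi> - (1/2)*C1*C2 - (C3/2) * inverse (\<phi> - C1)"
  proof (cases "\<phi> = C1")
    case True thus ?thesis by (simp add: U_def)
  next
    case False hence "\<phi> - C1 \<noteq> 0" by simp
    thus ?thesis by (simp add: U_def field_simps)
  qed
qed

lemma U_deriv: "\<phi> \<noteq> C1 \<Longrightarrow> (UU has_real_derivative Ud \<phi>) (at \<phi>)"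
proof -
  assume h: "\<phi> \<noteq> C1"
  hence h': "\<phi> - C1 \<noteq> 0" by simp
  show ?thesis unfolding eqU Ud_def
    by (auto intro!: derivative_eq_intros simp: h h' power2_eq_square)
qed

lemma Ud_y: "\<phi> < C1 \<Longrightarrow> Ud \<phi> = - a * (yv \<phi> - p) * Qp (yv \<phi>) / (yv \<phi>)^2"
proof -
  assume h: "\<phi> < C1"
  define y where "y = yv \<phi>"
  have y: "0 < y" using h C1_iff y_def by simp
  define x where "x = C1 - \<phi>"
  have x: "x > 0" using h x_def by simp
  have e: "\<phi> = C1 - x" using x_def by simp
  have e2: "(C3/2) * (inverse (C1 - x - C1))^2 = C3/(2*x^2)" using x by (simp add: field_simps)
  have "Ud \<phi> = x - a + C3/(2*x^2)" unfolding Ud_def e a_def e2 by (simp add: algebra_simps)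
  also have "\<dots> = - a * (1 - y) + a * cc / y^2"
  proof -
    have yx: "y = x / a" unfolding y_def yv_def x_def ..
    have "- a * (1 - y) = x - a" using a_pos unfolding yx by (simp add: algebra_simps)
    moreover have "a * cc / y^2 = C3/(2*x^2)" using a_pos x unfolding yx cc_def
      by (simp add: power2_eq_square power3_eq_cube)
    ultimately show ?thesis by simp
  qed
  also have "\<dots> = - a * (y - p) * Qp y / y^2"
    using y unfolding cc_p Qp_def by (simp add: field_simps power2_eq_square; simp add: algebra_simps)
  finally show ?thesis by (simp add: y_def)
qed

lemma U_cont: "\<phi> \<noteq> C1 \<Longrightarrow> isCont UU \<phi>"
  using U_deriv DERIV_isCont by blast

lemma Ud_cont: "\<phi> \<noteq> C1 \<Longrightarrow> isCont Ud \<phi>"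
  unfolding Ud_def by (auto intro!: continuous_intros)

lemma yv_range: "ph1 < \<phi> \<Longrightarrow> \<phi> < C1 \<Longrightarrow> 0 < yv \<phi> \<and> yv \<phi> < q"
  using a_pos by (auto simp: yv_def q_def field_simps)

lemma yv_lt_p: "ph2 < \<phi> \<Longrightarrow> yv \<phi> < p"
  using a_pos by (auto simp: yv_def p_def field_simps)
lemma yv_gt_p: "\<phi> < ph2 \<Longrightarrow> p < yv \<phi>"
  using a_pos by (auto simp: yv_def p_def field_simps)

lemma Ud_pos: "ph2 < \<phi> \<Longrightarrow> \<phi> < C1 \<Longrightarrow> 0 < Ud \<phi>"
proof -
  assume h: "ph2 < \<phi>" "\<phi> < C1"
  have y: "0 < yv \<phi>" "yv \<phi> < q" using yv_range h ph_order by auto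
  have "0 < a * (p - yv \<phi>) * Qp (yv \<phi>) / (yv \<phi>)^2"
    using y a_pos yv_lt_p[OF h(1)] Qp_pos[of "yv \<phi>"] by simp
  moreover have "Ud \<phi> = a * (p - yv \<phi>) * Qp (yv \<phi>) / (yv \<phi>)^2" using Ud_y[of \<phi>] h by (simp add: algebra_simps)
  ultimately show ?thesis by simp
qed

lemma Ud_neg: "ph1 < \<phi> \<Longrightarrow> \<phi> < ph2 \<Longrightarrow> Ud \<phi> < 0"
proof -
  assume h: "ph1 < \<phi>" "\<phi> < ph2"
  have y: "0 < yv \<phi>" "yv \<phi> < q" using yv_range h ph_order by auto
  have "0 < a * (yv \<phi> - p) * Qp (yv \<phi>) / (yv \<phi>)^2"
    using y a_pos yv_gt_p[OF h(2)] Qp_pos[of "yv \<phi>"] by simp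
  moreover have "Ud \<phi> = - (a * (yv \<phi> - p) * Qp (yv \<phi>) / (yv \<phi>)^2)" using Ud_y[of \<phi>] h ph_order by simp
  ultimately show ?thesis by linarith
qed

lemma U_incr: "ph2 \<le> x \<Longrightarrow> x < z \<Longrightarrow> z < C1 \<Longrightarrow> UU x < UU z"
  apply (rule DERIV_pos_imp_increasing_open, assumption)
   apply (rule exI, rule conjI, rule U_deriv, simp, rule Ud_pos; simp)
  apply (rule continuous_at_imp_continuous_on)
  using U_cont by auto

lemma U_decr: "ph1 \<le> x \<Longrightarrow> x < z \<Longrightarrow> z \<le> ph2 \<Longrightarrow> UU z < UU x"
  apply (rule DERIV_neg_imp_decreasing_open, assumption)
   apply (rule exI, rule conjI, rule U_deriv) using ph_order apply simp
   apply (rule Ud_neg; simp)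
  apply (rule continuous_at_imp_continuous_on)
  using U_cont ph_order by auto

end


definition "Qf p y = p + y - p^2 - p*y - (y::real)^2"
definition "Qfd p y = 1 - p - 2*(y::real)"
definition "Af p y = (y::real)^3*(2 - 2*p - y)"
definition "Afd p y = 3*(2-2*p)*(y::real)^2 - 4*y^3"
definition "Afdd p y = 6*(2-2*p)*(y::real) - 12*y^2"
definition "Bf p y = Afd p y * Qf p y - 2 * Af p y * Qfd p y"
definition "Bfd p y = Afdd p y * Qf p y + Afd p y * Qfd p y - 2 * (Afd p y * Qfd p y + Af p y * (-2))"
definition "Nf p y = Af p y / (2 * (Qf p y)^2)"
definition "Nfd p y = Bf p y / (2 * (Qf p y)^3)"
definition "Nfdd p y = (Bfd p y * Qf p y - 3 * Bf p y * Qfd p y) / (2 * (Qf p y)^4)"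
definition "Kf p y = 2*p^2*(1-p)^2 - 2*y*p^2*(1-p) + 4*y^2*p*(1-p) + (y::real)^3*(1-3*p)"

lemma Qf_deriv: "(Qf p has_real_derivative Qfd p y) (at y)"
  unfolding Qf_def[abs_def] Qfd_def by (auto intro!: derivative_eq_intros)
lemma Af_deriv: "(Af p has_real_derivative Afd p y) (at y)"
  unfolding Af_def[abs_def] Afd_def by (auto intro!: derivative_eq_intros simp: algebra_simps power2_eq_square power3_eq_cube)
lemma Afd_deriv: "(Afd p has_real_derivative Afdd p y) (at y)"
  unfolding Afd_def[abs_def] Afdd_def by (auto intro!: derivative_eq_intros simp: algebra_simps power2_eq_square power3_eq_cube)
lemma Qfd_deriv: "(Qfd p has_real_derivative -2) (at y)"
  unfolding Qfd_def[abs_def] by (auto intro!: derivative_eq_intros)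
lemma Bf_deriv: "(Bf p has_real_derivative Bfd p y) (at y)"
  unfolding Bf_def[abs_def] Bfd_def
  by (rule derivative_eq_intros Afd_deriv Qf_deriv Af_deriv Qfd_deriv refl)+ (simp add: algebra_simps)

lemma deriv_quot2:
  fixes A Q :: "real \<Rightarrow> real"
  assumes "(A has_real_derivative A') (at y)" "(Q has_real_derivative Q') (at y)" "Q y \<noteq> 0"
  shows "((\<lambda>y. A y / (2*(Q y)^2)) has_real_derivative (A' * Q y - 2 * A y * Q') / (2*(Q y)^3)) (at y)"
  using assms by (auto intro!: derivative_eq_intros simp: field_simps power2_eq_square power3_eq_cube)

lemma deriv_quot3:
  fixes A Q :: "real \<Rightarrow> real"
  assumes "(A has_real_derivative A') (at y)" "(Q has_real_derivative Q') (at y)" "Q y \<noteq> 0"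
  shows "((\<lambda>y. A y / (2*(Q y)^3)) has_real_derivative (A' * Q y - 3 * A y * Q') / (2*(Q y)^4)) (at y)"
  using assms by (auto intro!: derivative_eq_intros simp: field_simps power2_eq_square power3_eq_cube power4_eq_xxxx)

lemma Nf_deriv: "Qf p y \<noteq> 0 \<Longrightarrow> (Nf p has_real_derivative Nfd p y) (at y)"
  unfolding Nf_def[abs_def] Nfd_def Bf_def
  by (rule deriv_quot2[OF Af_deriv Qf_deriv])

lemma Nfd_deriv: "Qf p y \<noteq> 0 \<Longrightarrow> (Nfd p has_real_derivative Nfdd p y) (at y)"
  unfolding Nfd_def[abs_def] Nfdd_def
  by (rule deriv_quot3[OF Bf_deriv Qf_deriv])

lemma Nfdd_num: "Bfd p y * Qf p y - 3 * Bf p y * Qfd p y = 6*y*(1-p)*Kf p y"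
  unfolding Bfd_def Bf_def Afdd_def Afd_def Af_def Qf_def Qfd_def Kf_def
  by (simp add: algebra_simps power2_eq_square power3_eq_cube)

definition "KK2 m w = 2*(1+m)^2*(m^2)^2*(1+w)^3 - 2*(m*(1+m)*w)*(1+m)^2*m^2*(1+w)^2
   + 4*(m*(1+m)*w)^2*(1+m)*m^2*(1+w) + (m*(1+m)*w)^3*(m^2-2*m-2::real)"

lemma KK2_expand: "KK2 (1+u) w = 8 + 8*w + 24*w^2 + 40*u + 48*u*w + 152*u*w^2 + 36*u*w^3 + 82*u^2 + 114*u^2*w + 390*u^2*w^2 + 168*u^2*w^3 + 88*u^3 + 138*u^3*w + 528*u^3*w^2 + 325*u^3*w^3 + 52*u^4 + 90*u^4*w + 408*u^4*w^2 + 337*u^4*w^3 + 16*u^5 + 30*u^5*w + 180*u^5*w^2 + 202*u^5*w^3 + 2*u^6 + 4*u^6*w + 42*u^6*w^2 + 70*u^6*w^3 + 4*u^7*w^2 + 13*u^7*w^3 + 1*u^8*w^3"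
  unfolding KK2_def by (simp add: algebra_simps numeral_eq_Suc power_Suc)

lemma KK2_pos: "0 < u \<Longrightarrow> 0 < w \<Longrightarrow> 0 < KK2 (1+u) w"
  unfolding KK2_expand
  by (auto intro!: add_pos_nonneg add_nonneg_nonneg mult_nonneg_nonneg zero_le_power simp: less_imp_le)

lemma Kf_ident: "D^4*(1+w)^3*Kf p y = 2*(p*D)^2*((1-p)*D)^2*(1+w)^3 - 2*(y*D*(1+w))*(p*D)^2*((1-p)*D)*(1+w)^2
   + 4*(y*D*(1+w))^2*(p*D)*((1-p)*D)*(1+w) + (y*D*(1+w))^3*(D*(1-3*p))"
  unfolding Kf_def by (simp add: algebra_simps numeral_eq_Suc power_Suc)

lemma Kf_pos:
  assumes p: "0 < p" "p < q" and Q: "Qf p q = 0" and y: "0 < y" "y < q"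
  shows "0 < Kf p y"
proof -
  define m where "m = q/p"
  define w where "w = y/(q-y)"
  define D where "D = 1 + m + m^2"
  have qm: "q = m*p" using p by (simp add: m_def)
  have m1: "1 < m" using p by (simp add: m_def)
  have w0: "0 < w" using y by (simp add: w_def)
  have "Qf p q = p * (1 + m - p*D)" unfolding qm Qf_def D_def by (simp add: algebra_simps power2_eq_square)
  hence pD: "p*D = 1 + m" using Q p by simp
  have rD: "(1-p)*D = m^2" using pD by (simp add: D_def algebra_simps power2_eq_square)
  have "y*(1+w) = q*w" using y by (simp add: w_def field_simps)
  hence yD: "y*D*(1+w) = m*(1+m)*w" using pD qm by (metis mult.assoc mult.commute)
  have eD: "D*(1-3*p) = m^2-2*m-2" using pD by (simp add: D_def algebra_simps power2_eq_square)
  have "D^4*(1+w)^3*Kf p y = KK2 m w"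
    unfolding Kf_ident pD rD yD eD KK2_def by simp
  moreover have "KK2 m w > 0" using KK2_pos[of "m-1" w] m1 w0 by simp
  moreover have "D > 0" using m1 by (simp add: D_def add_pos_pos)
  ultimately have "D^4*(1+w)^3*Kf p y > 0" by simp
  moreover have "D^4*(1+w)^3 > 0" using \<open>D > 0\<close> w0 by simp
  ultimately show ?thesis by (simp add: zero_less_mult_iff)
qed


lemma big_y:
  fixes p A E :: real
  assumes p: "0 < p" "p < 2/3" and E: "0 < E" and A: "0 < A"
  shows "\<exists>y. 0 < y \<and> y < p \<and> E < A*(y-p)^2*(2-y-2*p)/(2*y)"
proof -
  define X where "X = A*p^2*(2-3*p)"
  have X: "0 < X" using p A by (simp add: X_def)
  define y where "y = min (p/2) (X/(16*E))"
  have y0: "0 < y" using p X E by (simp add: y_def)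
  have y1: "y \<le> p/2" by (simp add: y_def)
  have y2: "y \<le> X/(16*E)" by (simp add: y_def)
  have h1: "p^2/4 \<le> (y-p)^2"
  proof -
    have "p/2 \<le> p - y" using y1 by simp
    hence "(p/2)^2 \<le> (p-y)^2" using p by (intro power_mono) auto
    thus ?thesis by (simp add: power2_eq_square algebra_simps)
  qed
  have h2: "2 - 3*p \<le> 2 - y - 2*p" using y1 p by simp
  have h3: "A*(p^2/4)*(2-3*p) \<le> A*(y-p)^2*(2-y-2*p)"
    using h1 h2 A p by (intro mult_mono) auto
  have h4: "16*E*y \<le> X" using y2 E by (simp add: field_simps)
  have "E < 2*E" using E by simp
  also have "2*E \<le> X/(8*y)" using h4 y0 by (simp add: field_simps)
  also have "X/(8*y) = A*(p^2/4)*(2-3*p)/(2*y)" by (simp add: X_def field_simps)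
  also have "\<dots> \<le> A*(y-p)^2*(2-y-2*p)/(2*y)" by (rule divide_right_mono[OF h3]) (use y0 in simp)
  finally show ?thesis using y0 y1 p by (intro exI[of _ y]) auto
qed

context dgh begin

lemma Qp_Qf: "Qp y = Qf p y" by (simp add: Qp_def Qf_def)

lemma Nfdd_pos: "0 < y \<Longrightarrow> y < q \<Longrightarrow> 0 < Nfdd p y"
proof -
  assume y: "0 < y" "y < q"
  have K: "0 < Kf p y" using Kf_pos[of p q y] phi2_props(1) p_lt_q Qp_q y by (simp add: Qp_Qf)
  have Q: "0 < Qf p y" using Qp_pos[of y] y by (simp add: Qp_Qf)
  have "Nfdd p y = 6*y*(1-p)*Kf p y / (2*(Qf p y)^4)" unfolding Nfdd_def Nfdd_num ..
  moreover have "0 < 6*y*(1-p)*Kf p y" using y K phi2_props(2) by simp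
  ultimately show ?thesis using Q by simp
qed

lemma Nfd_mono: "0 < y1 \<Longrightarrow> y1 < y2 \<Longrightarrow> y2 < q \<Longrightarrow> Nfd p y1 < Nfd p y2"
  apply (rule DERIV_pos_imp_increasing, assumption)
  apply (rule exI, rule conjI, rule Nfd_deriv)
   apply (metis Qp_Qf Qp_pos less_eq_real_def less_le_trans order.strict_trans1 not_less)
  apply (rule Nfdd_pos; linarith)
  done

lemma Nf_pos: "0 < y \<Longrightarrow> y < q \<Longrightarrow> 0 < Nf p y"
proof -
  assume y: "0 < y" "y < q"
  have Q: "0 < Qf p y" using Qp_pos[of y] y by (simp add: Qp_Qf)
  have "0 < 2 - 2*p - y" using q_lt y by simp
  hence "0 < Af p y" using y by (simp add: Af_def)
  thus ?thesis using Q by (simp add: Nf_def)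
qed

definition "G \<phi> = sqrt (2 * Nf p (yv \<phi>))"
definition "Gd \<phi> = - Nfd p (yv \<phi>) / (a * G \<phi>)"

lemma G_pos: "ph1 < \<phi> \<Longrightarrow> \<phi> < C1 \<Longrightarrow> 0 < G \<phi>"
  using Nf_pos yv_range by (simp add: G_def)

lemma G_sq: "ph1 < \<phi> \<Longrightarrow> \<phi> < C1 \<Longrightarrow> (G \<phi> * Ud \<phi>)^2 = 2 * (UU \<phi> - UU ph2)"
proof -
  assume h: "ph1 < \<phi>" "\<phi> < C1"
  define y where "y = yv \<phi>"
  have y: "0 < y" "y < q" using yv_range[OF h] y_def by auto
  have Q: "0 < Qp y" using Qp_pos y by simp
  have g1: "(G \<phi>)^2 = 2 * Nf p y" using Nf_pos[OF y] by (simp add: G_def y_def)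
  have g2: "(G \<phi>)^2 = 2 * (y^3*(2-2*p-y) / (2*(Qp y)^2))"
    unfolding g1 by (simp add: Nf_def Af_def Qp_Qf)
  have u2: "(Ud \<phi>)^2 = (a * (y - p) * Qp y / y^2)^2"
    using Ud_y[OF h(2)] by (simp add: y_def power2_eq_square)
  have "(G \<phi> * Ud \<phi>)^2 = (G \<phi>)^2 * (Ud \<phi>)^2" by (simp add: power_mult_distrib)
  also have "\<dots> = 2 * (y^3*(2-2*p-y) / (2*(Qp y)^2)) * (a * (y - p) * Qp y / y^2)^2"
    unfolding g2 u2 ..
  also have "\<dots> = 2 * (a^2 * (y - p)^2 * (2 - y - 2*p) / (2 * y))"
    using y Q by (simp add: field_simps power2_eq_square power3_eq_cube)
  also have "\<dots> = 2 * (UU \<phi> - UU ph2)" using U_diff[OF h(2)] by (simp add: y_def)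
  finally show ?thesis .
qed

lemma G_Ud_plus: "ph2 < \<phi> \<Longrightarrow> \<phi> < C1 \<Longrightarrow> G \<phi> * Ud \<phi> = sqrt (2 * (UU \<phi> - UU ph2))"
proof -
  assume h: "ph2 < \<phi>" "\<phi> < C1"
  have "0 < G \<phi> * Ud \<phi>" using G_pos[of \<phi>] Ud_pos[OF h] h ph_order by simp
  moreover have "(G \<phi> * Ud \<phi>)^2 = 2 * (UU \<phi> - UU ph2)" using G_sq h ph_order by simp
  ultimately show ?thesis by (metis abs_of_pos real_sqrt_abs)
qed

lemma G_Ud_minus: "ph1 < \<phi> \<Longrightarrow> \<phi> < ph2 \<Longrightarrow> G \<phi> * (- Ud \<phi>) = sqrt (2 * (UU \<phi> - UU ph2))"
proof -
  assume h: "ph1 < \<phi>" "\<phi> < ph2"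
  have "0 < G \<phi> * (- Ud \<phi>)" using G_pos[of \<phi>] Ud_neg[OF h] h ph_order by (intro mult_pos_pos) auto
  moreover have "(G \<phi> * (- Ud \<phi>))^2 = 2 * (UU \<phi> - UU ph2)" using G_sq[of \<phi>] h ph_order by simp
  ultimately show ?thesis by (metis abs_of_pos real_sqrt_abs)
qed

lemma G_deriv: "ph1 < \<phi> \<Longrightarrow> \<phi> < C1 \<Longrightarrow> (G has_real_derivative Gd \<phi>) (at \<phi>)"
proof -
  assume h: "ph1 < \<phi>" "\<phi> < C1"
  have y: "0 < yv \<phi>" "yv \<phi> < q" using yv_range[OF h] by auto
  have Q: "Qf p (yv \<phi>) \<noteq> 0" using Qp_pos[of "yv \<phi>"] y by (simp add: Qp_Qf)
  have N: "0 < 2 * Nf p (yv \<phi>)" using Nf_pos[OF y] by simp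
  have dy: "(yv has_real_derivative (-1/a)) (at \<phi>)"
    unfolding yv_def[abs_def] using a_pos by (auto intro!: derivative_eq_intros simp: field_simps)
  have d1: "((\<lambda>\<phi>. 2 * Nf p (yv \<phi>)) has_real_derivative 2 * (Nfd p (yv \<phi>) * (-1/a))) (at \<phi>)"
    by (intro DERIV_cmult DERIV_chain2[OF Nf_deriv[OF Q] dy])
  have d2: "((\<lambda>\<phi>. sqrt (2 * Nf p (yv \<phi>))) has_real_derivative
      inverse (sqrt (2 * Nf p (yv \<phi>))) / 2 * (2 * (Nfd p (yv \<phi>) * (-1/a)))) (at \<phi>)"
    by (rule DERIV_chain2[OF DERIV_real_sqrt[OF N] d1])
  have "inverse (sqrt (2 * Nf p (yv \<phi>))) / 2 * (2 * (Nfd p (yv \<phi>) * (-1/a))) = Gd \<phi>"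
  proof -
    have an: "a \<noteq> 0" using a_pos by simp
    have sn: "sqrt (2 * Nf p (yv \<phi>)) \<noteq> 0" using N by simp
    show ?thesis using an sn by (simp add: Gd_def G_def field_simps)
  qed
  with d2 show ?thesis unfolding G_def[abs_def] by simp
qed

lemma G_cont: "ph1 < \<phi> \<Longrightarrow> \<phi> < C1 \<Longrightarrow> isCont G \<phi>"
  using G_deriv DERIV_isCont by blast

abbreviation "U0 \<equiv> UU ph2"
abbreviation "U1 \<equiv> UU ph1"
abbreviation "PP \<equiv> phiplus C1 C2 C3"
abbreviation "MM \<equiv> phiminus C1 C2 C3"

lemma U0_U1: "U0 < U1" using U_decr[of ph1 ph2] ph_order by simp

lemma P_ex: "U0 < b \<Longrightarrow> \<exists>\<phi>. UU \<phi> = b \<and> ph2 < \<phi> \<and> \<phi> < C1"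
proof -
  assume b: "U0 < b"
  obtain y where y: "0 < y" "y < p" "b - U0 < a^2*(y-p)^2*(2-y-2*p)/(2*y)"
    using big_y[of p "b - U0" "a^2"] phi2_props(1,2) b a_pos by auto
  define \<phi>0 where "\<phi>0 = C1 - a*y"
  have yv0: "yv \<phi>0 = y" by (simp add: \<phi>0_def yv_inv)
  have "\<phi>0 < C1" using y a_pos by (simp add: \<phi>0_def)
  have "ph2 < \<phi>0" using y a_pos by (simp add: \<phi>0_def p_def yv_def field_simps)
  have "b < UU \<phi>0" using U_diff[OF \<open>\<phi>0 < C1\<close>] y(3) unfolding yv0 by simp
  obtain x where x: "ph2 \<le> x" "x \<le> \<phi>0" "UU x = b"
    using IVT[of UU ph2 b \<phi>0] b \<open>b < UU \<phi>0\<close> \<open>ph2 < \<phi>0\<close> \<open>\<phi>0 < C1\<close> U_cont by fastforce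
  have "x \<noteq> ph2" using x b by auto
  thus ?thesis using x \<open>\<phi>0 < C1\<close> by (intro exI[of _ x]) auto
qed

lemma P_props: "U0 < b \<Longrightarrow> ph2 < PP b \<and> PP b < C1 \<and> UU (PP b) = b"
proof -
  assume b: "U0 < b"
  have "\<exists>!\<phi>. UU \<phi> = b \<and> ph2 < \<phi> \<and> \<phi> < C1"
  proof (rule ex_ex1I)
    show "\<exists>\<phi>. UU \<phi> = b \<and> ph2 < \<phi> \<and> \<phi> < C1" using P_ex[OF b] .
  next
    fix x z assume "UU x = b \<and> ph2 < x \<and> x < C1" "UU z = b \<and> ph2 < z \<and> z < C1"
    thus "x = z" using U_incr[of x z] U_incr[of z x] by (cases x z rule: linorder_cases) auto
  qed
  from theI'[OF this] show ?thesis unfolding phiplus_def by auto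
qed

lemma P_eq: "ph2 < z \<Longrightarrow> z < C1 \<Longrightarrow> PP (UU z) = z"
proof -
  assume z: "ph2 < z" "z < C1"
  have "U0 < UU z" using U_incr[of ph2 z] z by simp
  from P_props[OF this] have "ph2 < PP (UU z)" "PP (UU z) < C1" "UU (PP (UU z)) = UU z" by auto
  thus ?thesis using z U_incr[of "PP (UU z)" z] U_incr[of z "PP (UU z)"]
    by (cases "PP (UU z)" z rule: linorder_cases) auto
qed

lemma M_props: "U0 < b \<Longrightarrow> b < U1 \<Longrightarrow> ph1 < MM b \<and> MM b < ph2 \<and> UU (MM b) = b"
proof -
  assume b: "U0 < b" "b < U1"
  have "\<exists>!\<phi>. UU \<phi> = b \<and> ph1 < \<phi> \<and> \<phi> < ph2"
  proof (rule ex_ex1I)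
    obtain x where x: "ph1 \<le> x" "x \<le> ph2" "UU x = b"
      using IVT2[of UU ph2 b ph1] b ph_order U_cont by fastforce
    have "x \<noteq> ph1" "x \<noteq> ph2" using x b by auto
    thus "\<exists>\<phi>. UU \<phi> = b \<and> ph1 < \<phi> \<and> \<phi> < ph2" using x by (intro exI[of _ x]) auto
  next
    fix x z assume "UU x = b \<and> ph1 < x \<and> x < ph2" "UU z = b \<and> ph1 < z \<and> z < ph2"
    thus "x = z" using U_decr[of x z] U_decr[of z x] by (cases x z rule: linorder_cases) auto
  qed
  from theI'[OF this] show ?thesis unfolding phiminus_def by auto
qed

lemma M_eq: "ph1 < z \<Longrightarrow> z < ph2 \<Longrightarrow> MM (UU z) = z"
proof -
  assume z: "ph1 < z" "z < ph2"
  have "U0 < UU z" using U_decr[of z ph2] z ph_order by simp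
  moreover have "UU z < U1" using U_decr[of ph1 z] z by simp
  ultimately have "ph1 < MM (UU z)" "MM (UU z) < ph2" "UU (MM (UU z)) = UU z" using M_props by auto
  thus ?thesis using z U_decr[of "MM (UU z)" z] U_decr[of z "MM (UU z)"]
    by (cases "MM (UU z)" z rule: linorder_cases) auto
qed

lemma P_cont: "U0 < b \<Longrightarrow> isCont PP b"
proof -
  assume b: "U0 < b"
  note P = P_props[OF b]
  have "isCont PP (UU (PP b))"
  proof (rule isCont_inverse_function2[where f=UU and g=PP and x="PP b" and a="(ph2 + PP b)/2" and b="(PP b + C1)/2"])
    show "(ph2 + PP b) / 2 < PP b" "PP b < (PP b + C1) / 2" using P by auto
    fix z assume "(ph2 + PP b) / 2 \<le> z" "z \<le> (PP b + C1) / 2"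
    hence z: "ph2 < z" "z < C1" using P by auto
    show "PP (UU z) = z" using P_eq[OF z] .
    show "isCont UU z" using U_cont z by simp
  qed
  thus ?thesis using P by simp
qed

lemma P_deriv: "U0 < b \<Longrightarrow> (PP has_real_derivative inverse (Ud (PP b))) (at b)"
proof -
  assume b: "U0 < b"
  note P = P_props[OF b]
  show ?thesis
  proof (rule DERIV_inverse_function[where f=UU and a=U0 and b="b+1"])
    show "(UU has_real_derivative Ud (PP b)) (at (PP b))" using U_deriv P by simp
    show "Ud (PP b) \<noteq> 0" using Ud_pos P by force
    show "U0 < b" "b < b + 1" using b by auto
    fix y assume "U0 < y" "y < b + 1"
    thus "UU (PP y) = y" using P_props by auto
  next
    show "isCont PP b" using P_cont b .
  qed
qed

lemma M_cont: "U0 < b \<Longrightarrow> b < U1 \<Longrightarrow> isCont MM b"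
proof -
  assume b: "U0 < b" "b < U1"
  note M = M_props[OF b]
  have "isCont MM (UU (MM b))"
  proof (rule isCont_inverse_function2[where f=UU and g=MM and x="MM b" and a="(ph1 + MM b)/2" and b="(MM b + ph2)/2"])
    show "(ph1 + MM b) / 2 < MM b" "MM b < (MM b + ph2) / 2" using M by auto
    fix z assume "(ph1 + MM b) / 2 \<le> z" "z \<le> (MM b + ph2) / 2"
    hence z: "ph1 < z" "z < ph2" using M by auto
    show "MM (UU z) = z" using M_eq[OF z] .
    show "isCont UU z" using U_cont z ph_order by simp
  qed
  thus ?thesis using M by simp
qed

lemma M_deriv: "U0 < b \<Longrightarrow> b < U1 \<Longrightarrow> (MM has_real_derivative inverse (Ud (MM b))) (at b)"
proof -
  assume b: "U0 < b" "b < U1"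
  note M = M_props[OF b]
  show ?thesis
  proof (rule DERIV_inverse_function[where f=UU and a=U0 and b=U1])
    show "(UU has_real_derivative Ud (MM b)) (at (MM b))" using U_deriv M ph_order by simp
    show "Ud (MM b) \<noteq> 0" using Ud_neg M by force
    show "U0 < b" "b < U1" using b by auto
    fix y assume "U0 < y" "y < U1"
    thus "UU (MM y) = y" using M_props by auto
  next
    show "isCont MM b" using M_cont b .
  qed
qed

lemma P_lim: "(PP \<longlongrightarrow> ph2) (at_right U0)"
proof (rule order_tendstoI)
  fix l assume "l < ph2"
  show "\<forall>\<^sub>F s in at_right U0. l < PP s"
    using eventually_at_right_less[of U0] by eventually_elim (use P_props \<open>l < ph2\<close> in force)
next
  fix u assume u: "ph2 < u"
  define v where "v = min u ((ph2 + C1)/2)"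
  have v: "ph2 < v" "v < C1" "v \<le> u" using u ph_order by (auto simp: v_def min_def)
  have Uv: "U0 < UU v" using U_incr[of ph2 v] v by simp
  have "\<forall>\<^sub>F s in at_right U0. s < UU v"
    unfolding eventually_at_right_field using Uv by (intro exI[of _ "UU v"]) auto
  with eventually_at_right_less[of U0] show "\<forall>\<^sub>F s in at_right U0. PP s < u"
  proof eventually_elim
    case (elim s)
    note P = P_props[OF elim(1)]
    have "PP s < v"
    proof (rule ccontr)
      assume "\<not> PP s < v"
      hence "UU v \<le> UU (PP s)" using U_incr[of v "PP s"] P v by (cases "PP s = v") auto
      thus False using P elim by simp
    qed
    thus ?case using v by simp
  qed
qed

lemma M_lim: "(MM \<longlongrightarrow> ph2) (at_right U0)"
proof (rule order_tendstoI)
  fix u assume "ph2 < u"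
  have "\<forall>\<^sub>F s in at_right U0. s < U1"
    unfolding eventually_at_right_field using U0_U1 by (intro exI[of _ U1]) auto
  with eventually_at_right_less[of U0] show "\<forall>\<^sub>F s in at_right U0. MM s < u"
    by eventually_elim (use M_props \<open>ph2 < u\<close> in force)
next
  fix l assume l: "l < ph2"
  define v where "v = max l ((ph1 + ph2)/2)"
  have v: "ph1 < v" "v < ph2" "l \<le> v" using l ph_order by (auto simp: v_def max_def)
  have Uv: "U0 < UU v" using U_decr[of v ph2] v by simp
  have Uv1: "UU v < U1" using U_decr[of ph1 v] v by simp
  have "\<forall>\<^sub>F s in at_right U0. s < UU v"
    unfolding eventually_at_right_field using Uv by (intro exI[of _ "UU v"]) auto
  with eventually_at_right_less[of U0] show "\<forall>\<^sub>F s in at_right U0. l < MM s"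
  proof eventually_elim
    case (elim s)
    have s1: "s < U1" using elim Uv1 by simp
    note M = M_props[OF elim(1) s1]
    have "v < MM s"
    proof (rule ccontr)
      assume "\<not> v < MM s"
      hence "UU v \<le> UU (MM s)" using U_decr[of "MM s" v] M v by (cases "MM s = v") auto
      thus False using M elim by simp
    qed
    thus ?case using v by simp
  qed
qed

definition "FF b = G (MM b) + G (PP b)"

lemma FF_deriv_pos:
  assumes b: "U0 < b" "b < U1"
  shows "\<exists>D. (FF has_real_derivative D) (at b) \<and> 0 < D"
proof -
  note M = M_props[OF b] and P = P_props[OF b(1)]
  define S where "S = sqrt (2 * (b - U0))"
  have S: "0 < S" using b by (simp add: S_def)
  have GP: "G (PP b) * Ud (PP b) = S" using G_Ud_plus[of "PP b"] P by (simp add: S_def)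
  have GM: "G (MM b) * (- Ud (MM b)) = S" using G_Ud_minus[of "MM b"] M by (simp add: S_def)
  have dM: "((\<lambda>b. G (MM b)) has_real_derivative Gd (MM b) * inverse (Ud (MM b))) (at b)"
    by (rule DERIV_chain2[OF G_deriv M_deriv[OF b]]) (use M ph_order in auto)
  have dP: "((\<lambda>b. G (PP b)) has_real_derivative Gd (PP b) * inverse (Ud (PP b))) (at b)"
    by (rule DERIV_chain2[OF G_deriv P_deriv[OF b(1)]]) (use P ph_order in auto)
  have d: "(FF has_real_derivative Gd (MM b) * inverse (Ud (MM b)) + Gd (PP b) * inverse (Ud (PP b))) (at b)"
    unfolding FF_def[abs_def] by (rule DERIV_add[OF dM dP])
  have e1: "Gd (PP b) * inverse (Ud (PP b)) = - Nfd p (yv (PP b)) / (a * S)"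
    unfolding Gd_def GP[symmetric] by (simp add: field_simps)
  have e2: "Gd (MM b) * inverse (Ud (MM b)) = Nfd p (yv (MM b)) / (a * S)"
  proof -
    have "Ud (MM b) \<noteq> 0" using Ud_neg M by force
    moreover have "G (MM b) \<noteq> 0" using G_pos M ph_order by force
    ultimately show ?thesis unfolding Gd_def GM[symmetric] using a_pos by (simp add: field_simps)
  qed
  have yP: "0 < yv (PP b)" "yv (PP b) < p" using yv_range[of "PP b"] yv_lt_p[of "PP b"] P ph_order by auto
  have yM: "p < yv (MM b)" "yv (MM b) < q" using yv_range[of "MM b"] yv_gt_p[of "MM b"] M ph_order by auto
  have "Nfd p (yv (PP b)) < Nfd p (yv (MM b))" using Nfd_mono[of "yv (PP b)" "yv (MM b)"] yP yM by simp
  hence "0 < Nfd p (yv (MM b)) / (a * S) - Nfd p (yv (PP b)) / (a * S)"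
    using a_pos S by (simp add: field_simps)
  thus ?thesis using d e1 e2 by (intro exI[of _ "Gd (MM b) * inverse (Ud (MM b)) + Gd (PP b) * inverse (Ud (PP b))"]) simp
qed

lemma FF_mono: "U0 < b1 \<Longrightarrow> b1 < b2 \<Longrightarrow> b2 < U1 \<Longrightarrow> FF b1 < FF b2"
  by (rule DERIV_pos_imp_increasing) (auto intro!: FF_deriv_pos)

end


context dgh begin

lemma zero_less_pi2: "(0::ereal) < ereal (pi/2)" by (simp add: zero_ereal_def)

lemma FF_cont: "U0 < b \<Longrightarrow> b < U1 \<Longrightarrow> isCont FF b"
  using FF_deriv_pos DERIV_isCont by blast

lemma FF_G_bound: "U0 < s \<Longrightarrow> s < U1 \<Longrightarrow> G (PP s) \<le> FF s \<and> G (MM s) \<le> FF s"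
  using G_pos[of "PP s"] G_pos[of "MM s"] P_props[of s] M_props[of s] ph_order
  by (auto simp: FF_def)

definition "sfun b \<theta> = U0 + (b - U0) * (sin \<theta>)^2"

lemma sfun_deriv: "(sfun b has_real_derivative (b - U0) * (2 * sin \<theta> * cos \<theta>)) (at \<theta>)"
  unfolding sfun_def[abs_def] by (auto intro!: derivative_eq_intros)

lemma sfun_cont: "isCont (sfun b) \<theta>"
  unfolding sfun_def[abs_def] by (auto intro!: continuous_intros)

lemma sfun_range:
  assumes b: "U0 < b" and th: "0 < \<theta>" "\<theta> < pi/2"
  shows "U0 < sfun b \<theta>" "sfun b \<theta> < b"
proof -
  have s: "0 < sin \<theta>" using th by (intro sin_gt_zero) auto
  have c: "0 < cos \<theta>" using th by (intro cos_gt_zero) auto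
  have "(sin \<theta>)^2 < 1" using c sin_cos_squared_add[of \<theta>] by (simp add: power2_eq_square) (smt (verit) mult_pos_pos)
  show "U0 < sfun b \<theta>" using b s by (simp add: sfun_def)
  have "(b - U0) * (sin \<theta>)^2 < (b - U0) * 1"
    using b \<open>(sin \<theta>)^2 < 1\<close> by (intro mult_strict_left_mono) auto
  thus "sfun b \<theta> < b" by (simp add: sfun_def)
qed

lemma sfun_range':
  assumes b: "U0 < b" and th: "-pi/2 < \<theta>" "\<theta> < 0"
  shows "U0 < sfun b \<theta>" "sfun b \<theta> < b"
proof -
  have "sfun b \<theta> = sfun b (-\<theta>)" by (simp add: sfun_def)
  thus "U0 < sfun b \<theta>" "sfun b \<theta> < b" using sfun_range[OF b, of "-\<theta>"] th by auto
qed

lemma sfun_lim_right: "U0 < b \<Longrightarrow> filterlim (sfun b) (at_right U0) (at_right 0)"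
proof (rule tendsto_imp_filterlim_at_right)
  assume b: "U0 < b"
  have "(sfun b \<longlongrightarrow> sfun b 0) (at_right 0)"
    using sfun_cont[where b=b and \<theta>=0] by (simp add: isCont_def filterlim_at_split)
  thus "(sfun b \<longlongrightarrow> U0) (at_right 0)" by (simp add: sfun_def)
  show "\<forall>\<^sub>F x in at_right 0. U0 < sfun b x"
    unfolding eventually_at_right_field using b sfun_range
    by (intro exI[of _ "pi/2"]) auto
qed

lemma sfun_lim_left: "U0 < b \<Longrightarrow> filterlim (sfun b) (at_right U0) (at_left 0)"
proof (rule tendsto_imp_filterlim_at_right)
  assume b: "U0 < b"
  have "(sfun b \<longlongrightarrow> sfun b 0) (at_left 0)"
    using sfun_cont[where b=b and \<theta>=0] by (simp add: isCont_def filterlim_at_split)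
  thus "(sfun b \<longlongrightarrow> U0) (at_left 0)" by (simp add: sfun_def)
  show "\<forall>\<^sub>F x in at_left 0. U0 < sfun b x"
    unfolding eventually_at_left_field using b sfun_range'
    by (intro exI[of _ "-pi/2"]) auto
qed

definition "ff b \<phi> = 1 / sqrt (2 * (b - UU \<phi>))"

lemma sqrt_cos: "0 < E \<Longrightarrow> 0 \<le> cos \<theta> \<Longrightarrow> sqrt (2 * (E - E * (sin \<theta>)^2)) = sqrt (2*E) * cos \<theta>"
proof -
  assume E: "0 < E" and c: "0 \<le> cos \<theta>"
  have "2 * (E - E * (sin \<theta>)^2) = (2*E) * (cos \<theta>)^2"
    unfolding cos_squared_eq by (simp add: algebra_simps)
  thus ?thesis using c by (simp add: real_sqrt_mult)
qed

lemma sqrt_sin: "0 < E \<Longrightarrow> sqrt (2 * (E * (sin \<theta>)^2)) = sqrt (2*E) * \<bar>sin \<theta>\<bar>"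
  by (simp add: real_sqrt_mult mult.assoc)

lemma branch_plus:
  assumes b: "U0 < b" "b < U1"
  shows "\<exists>I. (ff b has_integral I) {ph2..PP b} \<and> ((\<lambda>\<theta>. G (PP (sfun b \<theta>))) has_integral I) {0..pi/2}"
proof -
  define E where "E = b - U0"
  have E: "0 < E" using b by (simp add: E_def)
  define g where "g \<theta> = PP (sfun b \<theta>)" for \<theta>
  define g' where "g' \<theta> = inverse (Ud (g \<theta>)) * (E * (2 * sin \<theta> * cos \<theta>))" for \<theta>
  define S where "S = sqrt (2*E)"
  have S: "0 < S" "S * S = 2*E" using E by (auto simp: S_def)
  have rng: "U0 < sfun b \<theta> \<and> sfun b \<theta> < U1 \<and> ph2 < g \<theta> \<and> g \<theta> < C1 \<and> UU (g \<theta>) = sfun b \<theta>"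
    if "0 < \<theta>" "\<theta> < pi/2" for \<theta>
    using sfun_range[OF b(1) that] b P_props[of "sfun b \<theta>"] by (auto simp: g_def)
  have sc: "0 < sin \<theta> \<and> 0 < cos \<theta>" if "0 < \<theta>" "\<theta> < pi/2" for \<theta>
    using that by (auto intro!: sin_gt_zero cos_gt_zero)
  have ident: "ff b (g \<theta>) * g' \<theta> = G (g \<theta>)" if th: "0 < \<theta>" "\<theta> < pi/2" for \<theta>
  proof -
    note r = rng[OF th] and sc = sc[OF th]
    have e1: "b - UU (g \<theta>) = E - E*(sin \<theta>)^2" using r by (simp add: sfun_def E_def algebra_simps)
    have c1: "sqrt (2 * (b - UU (g \<theta>))) = S * cos \<theta>"
      unfolding e1 S_def using sqrt_cos[OF E, of \<theta>] sc by simp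
    have e2: "UU (g \<theta>) - U0 = E*(sin \<theta>)^2" using r by (simp add: sfun_def E_def algebra_simps)
    have c2: "G (g \<theta>) * Ud (g \<theta>) = S * sin \<theta>"
      using G_Ud_plus[of "g \<theta>"] r unfolding e2 S_def using sqrt_sin[OF E, of \<theta>] sc by simp
    have u: "Ud (g \<theta>) \<noteq> 0" using Ud_pos r by force
    have "G (g \<theta>) = S * sin \<theta> / Ud (g \<theta>)" using c2 u by (simp add: field_simps)
    thus ?thesis unfolding ff_def g'_def c1 using u S sc by (simp add: field_simps)
  qed
  have contG: "isCont (\<lambda>\<theta>. G (g \<theta>)) \<theta>" if th: "0 < \<theta>" "\<theta> < pi/2" for \<theta>
  proof -
    note r = rng[OF th]
    have "isCont g \<theta>" unfolding g_def using isCont_o2[OF sfun_cont P_cont] r by blast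
    moreover have "isCont G (g \<theta>)" using G_cont r ph_order by auto
    ultimately show ?thesis by (rule isCont_o2)
  qed
  have bound: "norm (G (g \<theta>)) \<le> FF b" if th: "0 < \<theta>" "\<theta> < pi/2" for \<theta>
  proof -
    note r = rng[OF th]
    have "G (g \<theta>) \<le> FF (sfun b \<theta>)" using FF_G_bound[of "sfun b \<theta>"] r by (simp add: g_def)
    also have "\<dots> \<le> FF b" using FF_mono[of "sfun b \<theta>" b] r b sfun_range[OF b(1) th] by simp
    finally show ?thesis using G_pos[of "g \<theta>"] r ph_order by simp
  qed
  have intG: "set_integrable lborel {0<..<pi/2} (\<lambda>\<theta>. G (g \<theta>))"
    unfolding set_integrable_def
  proof (rule integrableI_bounded_set[where A="{0<..<pi/2}" and B="FF b"])
    have "continuous_on {0<..<pi/2} (\<lambda>\<theta>. G (g \<theta>))"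
      using contG by (intro continuous_at_imp_continuous_on) auto
    thus "(\<lambda>x. indicator {0<..<pi / 2} x *\<^sub>R G (g x)) \<in> borel_measurable lborel"
      using borel_measurable_continuous_on_indicator[of "{0<..<pi/2}" "\<lambda>\<theta>. G (g \<theta>)"] by simp
    show "{0<..<pi/2} \<in> sets lborel" by simp
    show "emeasure lborel {0<..<pi/2} < \<infinity>" by simp
    show "AE x in lborel. x \<in> {0<..<pi/2} \<longrightarrow> norm (indicator {0<..<pi / 2} x *\<^sub>R G (g x)) \<le> FF b"
      using bound by auto
    show "AE x in lborel. x \<notin> {0<..<pi/2} \<longrightarrow> indicator {0<..<pi / 2} x *\<^sub>R G (g x) = 0"
      by auto
  qed
  have intfg: "set_integrable lborel (einterval 0 (ereal (pi/2))) (\<lambda>\<theta>. ff b (g \<theta>) * g' \<theta>)"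
  proof -
    have "set_integrable lborel {0<..<pi/2} (\<lambda>\<theta>. ff b (g \<theta>) * g' \<theta>)"
      using intG by (rule set_integrable_cong[THEN iffD1, rotated -1]) (auto simp: ident)
    thus ?thesis by (simp add: zero_ereal_def)
  qed
  have limA: "((ereal \<circ> g \<circ> real_of_ereal) \<longlongrightarrow> ereal ph2) (at_right 0)"
  proof -
    have "(g \<longlongrightarrow> ph2) (at_right 0)"
      unfolding g_def[abs_def] by (rule filterlim_compose[OF P_lim sfun_lim_right[OF b(1)]])
    thus ?thesis by (simp add: zero_ereal_def ereal_tendsto_simps)
  qed
  have limB: "((ereal \<circ> g \<circ> real_of_ereal) \<longlongrightarrow> ereal (PP b)) (at_left (ereal (pi/2)))"
  proof -
    have sb: "sfun b (pi/2) = b" by (simp add: sfun_def)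
    have "isCont g (pi/2)" unfolding g_def using isCont_o2[OF sfun_cont P_cont] b sb by auto
    hence "(g \<longlongrightarrow> g (pi/2)) (at_left (pi/2))" by (simp add: isCont_def filterlim_at_split)
    hence "(g \<longlongrightarrow> PP b) (at_left (pi/2))" by (simp add: g_def sb)
    thus ?thesis by (simp add: ereal_tendsto_simps)
  qed
  have hd: "(g has_real_derivative g' x) (at x)" if "0 < ereal x" "ereal x < ereal (pi / 2)" for x
  proof -
    have th: "0 < x" "x < pi/2" using that by (auto simp: zero_ereal_def)
    note r = rng[OF th]
    show ?thesis unfolding g_def[abs_def] g'_def E_def
      by (rule DERIV_chain2[OF P_deriv sfun_deriv]) (use r in auto)
  qed
  have hcf: "isCont (ff b) (g x)" if "0 < ereal x" "ereal x < ereal (pi / 2)" for x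
  proof -
    have th: "0 < x" "x < pi/2" using that by (auto simp: zero_ereal_def)
    note r = rng[OF th]
    have bU: "UU (g x) < b" using r sfun_range[OF b(1) th] by simp
    hence bU': "0 < 2 * (b - UU (g x))" by simp
    have "isCont (\<lambda>\<phi>. 2 * (b - UU \<phi>)) (g x)" using U_cont[of "g x"] r by (auto intro!: continuous_intros)
    hence "isCont (\<lambda>\<phi>. sqrt (2 * (b - UU \<phi>))) (g x)" by (rule isCont_o2[OF _ isCont_real_sqrt])
    thus ?thesis unfolding ff_def[abs_def] using bU' by (auto intro!: continuous_intros)
  qed
  have hcg: "isCont g' x" if "0 < ereal x" "ereal x < ereal (pi / 2)" for x
  proof -
    have th: "0 < x" "x < pi/2" using that by (auto simp: zero_ereal_def)
    note r = rng[OF th]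
    have cg: "isCont g x" unfolding g_def using isCont_o2[OF sfun_cont P_cont] r by blast
    have "isCont (\<lambda>x. Ud (g x)) x" using isCont_o2[OF cg Ud_cont] r by auto
    moreover have "Ud (g x) \<noteq> 0" using Ud_pos r by force
    ultimately show ?thesis unfolding g'_def[abs_def] by (auto intro!: continuous_intros)
  qed
  have hfn: "0 \<le> ff b (g x)" if "0 < ereal x" "ereal x < ereal (pi / 2)" for x
  proof -
    have th: "0 < x" "x < pi/2" using that by (auto simp: zero_ereal_def)
    have bU: "UU (g x) < b" using rng[OF th] sfun_range[OF b(1) th] by simp
    thus ?thesis by (simp add: ff_def)
  qed
  have hgn: "0 \<le> g' x" if "0 \<le> ereal x" "ereal x \<le> ereal (pi / 2)" for x
  proof -
    have th: "0 \<le> x" "x \<le> pi/2" using that by (auto simp: zero_ereal_def)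
    show ?thesis
    proof (cases "x = 0")
      case True thus ?thesis by (simp add: g'_def)
    next
      case F1: False
      show ?thesis
      proof (cases "x = pi/2")
        case True thus ?thesis by (simp add: g'_def True)
      next
        case False
        hence th': "0 < x" "x < pi/2" using th F1 by auto
        have "0 < Ud (g x)" using Ud_pos rng[OF th'] by auto
        thus ?thesis using sc[OF th'] E by (simp add: g'_def)
      qed
    qed
  qed
  note sub = interval_integral_substitution_nonneg[where a=0 and b="ereal (pi/2)" and g=g and g'=g' and f="ff b"
        and A="ereal ph2" and B="ereal (PP b)", OF _ hd hcf hcg hfn hgn limA limB intfg]
  have PPb: "ph2 < PP b" using P_props b by auto
  have s1: "set_integrable lborel {ph2<..<PP b} (ff b)" using sub(1)[OF zero_less_pi2] by (simp add: zero_ereal_def)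
  have s2: "set_integrable lborel {0<..<pi/2} (\<lambda>x. ff b (g x) * g' x)" using intfg by (simp add: zero_ereal_def)
  define I where "I = (LBINT x=ereal ph2..ereal (PP b). ff b x)"
  have I1: "I = integral {ph2<..<PP b} (ff b)"
    unfolding I_def using PPb set_borel_integral_eq_integral(2)[OF s1]
    by (simp add: interval_integral_Ioo)
  have I2': "I = (LBINT x=0..ereal (pi/2). ff b (g x) * g' x)"
    using sub(2)[OF zero_less_pi2] by (simp add: I_def)
  have I2: "I = integral {0<..<pi/2} (\<lambda>x. ff b (g x) * g' x)"
    unfolding I2' using set_borel_integral_eq_integral(2)[OF s2]
    by (simp add: interval_integral_Ioo zero_ereal_def)
  have h1: "(ff b has_integral I) {ph2..PP b}"
    unfolding I1 has_integral_Icc_iff_Ioo using set_borel_integral_eq_integral(1)[OF s1]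
    by (simp add: has_integral_integral)
  have "((\<lambda>x. ff b (g x) * g' x) has_integral I) {0<..<pi/2}"
    unfolding I2 using set_borel_integral_eq_integral(1)[OF s2] by (simp add: has_integral_integral)
  hence "((\<lambda>x. G (g x)) has_integral I) {0<..<pi/2}"
    by (rule has_integral_cong[THEN iffD1, rotated]) (auto simp: ident)
  hence h2: "((\<lambda>x. G (g x)) has_integral I) {0..pi/2}" by (simp add: has_integral_Icc_iff_Ioo)
  show ?thesis using h1 h2 unfolding g_def by blast
qed

end


context dgh begin

lemma zero_gt_mpi2: "ereal (-pi/2) < (0::ereal)" by (simp add: zero_ereal_def)

lemma branch_minus:
  assumes b: "U0 < b" "b < U1"
  shows "\<exists>I. (ff b has_integral I) {MM b..ph2} \<and> ((\<lambda>\<theta>. G (MM (sfun b \<theta>))) has_integral I) {-pi/2..0}"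
proof -
  define E where "E = b - U0"
  have E: "0 < E" using b by (simp add: E_def)
  define g where "g \<theta> = MM (sfun b \<theta>)" for \<theta>
  define g' where "g' \<theta> = inverse (Ud (g \<theta>)) * (E * (2 * sin \<theta> * cos \<theta>))" for \<theta>
  define S where "S = sqrt (2*E)"
  have S: "0 < S" "S * S = 2*E" using E by (auto simp: S_def)
  have rng: "U0 < sfun b \<theta> \<and> sfun b \<theta> < U1 \<and> ph1 < g \<theta> \<and> g \<theta> < ph2 \<and> UU (g \<theta>) = sfun b \<theta>"
    if "-pi/2 < \<theta>" "\<theta> < 0" for \<theta>
  proof -
    have "U0 < sfun b \<theta>" "sfun b \<theta> < U1" using sfun_range'[OF b(1) that] b by auto
    thus ?thesis using M_props[of "sfun b \<theta>"] by (auto simp: g_def)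
  qed
  have sc: "sin \<theta> < 0 \<and> 0 < cos \<theta>" if "-pi/2 < \<theta>" "\<theta> < 0" for \<theta>
  proof -
    have "0 < sin (-\<theta>)" using that pi_gt_zero by (intro sin_gt_zero) auto
    moreover have "0 < cos \<theta>" using that pi_gt_zero by (intro cos_gt_zero_pi) auto
    ultimately show ?thesis by simp
  qed
  have ident: "ff b (g \<theta>) * g' \<theta> = G (g \<theta>)" if th: "-pi/2 < \<theta>" "\<theta> < 0" for \<theta>
  proof -
    note r = rng[OF th] and sc = sc[OF th]
    have e1: "b - UU (g \<theta>) = E - E*(sin \<theta>)^2" using r by (simp add: sfun_def E_def algebra_simps)
    have c1: "sqrt (2 * (b - UU (g \<theta>))) = S * cos \<theta>"
      unfolding e1 S_def using sqrt_cos[OF E, of \<theta>] sc by simp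
    have e2: "UU (g \<theta>) - U0 = E*(sin \<theta>)^2" using r by (simp add: sfun_def E_def algebra_simps)
    have c2: "G (g \<theta>) * (- Ud (g \<theta>)) = S * (- sin \<theta>)"
      using G_Ud_minus[of "g \<theta>"] r unfolding e2 S_def using sqrt_sin[OF E, of \<theta>] sc by simp
    have u: "Ud (g \<theta>) \<noteq> 0" using Ud_neg r by force
    have "G (g \<theta>) = S * sin \<theta> / Ud (g \<theta>)" using c2 u by (simp add: field_simps)
    thus ?thesis unfolding ff_def g'_def c1 using u S sc by (simp add: field_simps)
  qed
  have contG: "isCont (\<lambda>\<theta>. G (g \<theta>)) \<theta>" if th: "-pi/2 < \<theta>" "\<theta> < 0" for \<theta>
  proof -
    note r = rng[OF th]
    have "isCont g \<theta>" unfolding g_def using isCont_o2[OF sfun_cont M_cont] r by blast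
    moreover have "isCont G (g \<theta>)" using G_cont r ph_order by auto
    ultimately show ?thesis by (rule isCont_o2)
  qed
  have bound: "norm (G (g \<theta>)) \<le> FF b" if th: "-pi/2 < \<theta>" "\<theta> < 0" for \<theta>
  proof -
    note r = rng[OF th]
    have "G (g \<theta>) \<le> FF (sfun b \<theta>)" using FF_G_bound[of "sfun b \<theta>"] r by (simp add: g_def)
    also have "\<dots> \<le> FF b" using FF_mono[of "sfun b \<theta>" b] r b sfun_range'[OF b(1) th] by simp
    finally show ?thesis using G_pos[of "g \<theta>"] r ph_order by simp
  qed
  have intG: "set_integrable lborel {-pi/2<..<0} (\<lambda>\<theta>. G (g \<theta>))"
    unfolding set_integrable_def
  proof (rule integrableI_bounded_set[where A="{-pi/2<..<0}" and B="FF b"])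
    have "continuous_on {-pi/2<..<0} (\<lambda>\<theta>. G (g \<theta>))"
      using contG by (intro continuous_at_imp_continuous_on) auto
    thus "(\<lambda>x. indicator {-pi / 2<..<0} x *\<^sub>R G (g x)) \<in> borel_measurable lborel"
      using borel_measurable_continuous_on_indicator[of "{-pi/2<..<0}" "\<lambda>\<theta>. G (g \<theta>)"] by simp
    show "{-pi/2<..<0} \<in> sets lborel" by simp
    show "emeasure lborel {-pi/2<..<0} < \<infinity>" by simp
    show "AE x in lborel. x \<in> {-pi/2<..<0} \<longrightarrow> norm (indicator {-pi / 2<..<0} x *\<^sub>R G (g x)) \<le> FF b"
      using bound by auto
    show "AE x in lborel. x \<notin> {-pi/2<..<0} \<longrightarrow> indicator {-pi / 2<..<0} x *\<^sub>R G (g x) = 0"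
      by auto
  qed
  have intfg: "set_integrable lborel (einterval (ereal (-pi/2)) 0) (\<lambda>\<theta>. ff b (g \<theta>) * g' \<theta>)"
  proof -
    have "set_integrable lborel {-pi/2<..<0} (\<lambda>\<theta>. ff b (g \<theta>) * g' \<theta>)"
      using intG by (rule set_integrable_cong[THEN iffD1, rotated -1]) (auto simp: ident)
    thus ?thesis by (simp add: zero_ereal_def)
  qed
  have limA: "((ereal \<circ> g \<circ> real_of_ereal) \<longlongrightarrow> ereal (MM b)) (at_right (ereal (-pi/2)))"
  proof -
    have sb: "sfun b (-pi/2) = b" by (simp add: sfun_def)
    have "isCont g (-pi/2)" unfolding g_def using isCont_o2[OF sfun_cont M_cont] b sb by auto
    hence "(g \<longlongrightarrow> g (-pi/2)) (at_right (-pi/2))" by (simp add: isCont_def filterlim_at_split)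
    hence "(g \<longlongrightarrow> MM b) (at_right (-pi/2))" by (simp add: g_def sfun_def)
    thus ?thesis by (simp add: ereal_tendsto_simps)
  qed
  have limB: "((ereal \<circ> g \<circ> real_of_ereal) \<longlongrightarrow> ereal ph2) (at_left 0)"
  proof -
    have "(g \<longlongrightarrow> ph2) (at_left 0)"
      unfolding g_def[abs_def] by (rule filterlim_compose[OF M_lim sfun_lim_left[OF b(1)]])
    thus ?thesis by (simp add: zero_ereal_def ereal_tendsto_simps)
  qed
  have hd: "(g has_real_derivative g' x) (at x)" if "ereal (-pi/2) < ereal x" "ereal x < 0" for x
  proof -
    have th: "-pi/2 < x" "x < 0" using that by (auto simp: zero_ereal_def)
    note r = rng[OF th]
    show ?thesis unfolding g_def[abs_def] g'_def E_def
      by (rule DERIV_chain2[OF M_deriv sfun_deriv]) (use r in auto)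
  qed
  have hcf: "isCont (ff b) (g x)" if "ereal (-pi/2) < ereal x" "ereal x < 0" for x
  proof -
    have th: "-pi/2 < x" "x < 0" using that by (auto simp: zero_ereal_def)
    note r = rng[OF th]
    have bU: "UU (g x) < b" using r sfun_range'[OF b(1) th] by simp
    hence bU': "0 < 2 * (b - UU (g x))" by simp
    have "isCont (\<lambda>\<phi>. 2 * (b - UU \<phi>)) (g x)" using U_cont[of "g x"] r ph_order by (auto intro!: continuous_intros)
    hence "isCont (\<lambda>\<phi>. sqrt (2 * (b - UU \<phi>))) (g x)" by (rule isCont_o2[OF _ isCont_real_sqrt])
    thus ?thesis unfolding ff_def[abs_def] using bU' by (auto intro!: continuous_intros)
  qed
  have hcg: "isCont g' x" if "ereal (-pi/2) < ereal x" "ereal x < 0" for x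
  proof -
    have th: "-pi/2 < x" "x < 0" using that by (auto simp: zero_ereal_def)
    note r = rng[OF th]
    have cg: "isCont g x" unfolding g_def using isCont_o2[OF sfun_cont M_cont] r by blast
    have "isCont (\<lambda>x. Ud (g x)) x" using isCont_o2[OF cg Ud_cont] r ph_order by auto
    moreover have "Ud (g x) \<noteq> 0" using Ud_neg r by force
    ultimately show ?thesis unfolding g'_def[abs_def] by (auto intro!: continuous_intros)
  qed
  have hfn: "0 \<le> ff b (g x)" if "ereal (-pi/2) < ereal x" "ereal x < 0" for x
  proof -
    have th: "-pi/2 < x" "x < 0" using that by (auto simp: zero_ereal_def)
    have bU: "UU (g x) < b" using rng[OF th] sfun_range'[OF b(1) th] by simp
    thus ?thesis by (simp add: ff_def)
  qed
  have hgn: "0 \<le> g' x" if "ereal (-pi/2) \<le> ereal x" "ereal x \<le> 0" for x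
  proof -
    have th: "-pi/2 \<le> x" "x \<le> 0" using that by (auto simp: zero_ereal_def)
    show ?thesis
    proof (cases "x = 0")
      case True thus ?thesis by (simp add: g'_def)
    next
      case F1: False
      show ?thesis
      proof (cases "x = -pi/2")
        case True thus ?thesis by (simp add: g'_def True)
      next
        case False
        hence th': "-pi/2 < x" "x < 0" using th F1 by auto
        have "Ud (g x) < 0" using Ud_neg rng[OF th'] by auto
        hence "inverse (Ud (g x)) < 0" by simp
        moreover have "sin x < 0" "0 < cos x" using sc[OF th'] by auto
        ultimately have "0 < inverse (Ud (g x)) * (E * (2 * sin x * cos x))"
          using E by (simp add: mult_neg_neg mult_pos_neg zero_less_mult_iff mult_less_0_iff)
        thus ?thesis by (simp add: g'_def)
      qed
    qed
  qed
  note sub = interval_integral_substitution_nonneg[where a="ereal (-pi/2)" and b=0 and g=g and g'=g' and f="ff b"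
        and A="ereal (MM b)" and B="ereal ph2", OF _ hd hcf hcg hfn hgn limA limB intfg]
  have MMb: "MM b < ph2" using M_props b by auto
  have s1: "set_integrable lborel {MM b<..<ph2} (ff b)" using sub(1)[OF zero_gt_mpi2] by (simp add: zero_ereal_def)
  have s2: "set_integrable lborel {-pi/2<..<0} (\<lambda>x. ff b (g x) * g' x)" using intfg by (simp add: zero_ereal_def)
  define I where "I = (LBINT x=ereal (MM b)..ereal ph2. ff b x)"
  have I1: "I = integral {MM b<..<ph2} (ff b)"
    unfolding I_def using MMb set_borel_integral_eq_integral(2)[OF s1]
    by (simp add: interval_integral_Ioo)
  have I2': "I = (LBINT x=ereal (-pi/2)..0. ff b (g x) * g' x)"
    using sub(2)[OF zero_gt_mpi2] by (simp add: I_def)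
  have I2: "I = integral {-pi/2<..<0} (\<lambda>x. ff b (g x) * g' x)"
    unfolding I2' using set_borel_integral_eq_integral(2)[OF s2]
    by (simp add: interval_integral_Ioo zero_ereal_def)
  have h1: "(ff b has_integral I) {MM b..ph2}"
    unfolding I1 has_integral_Icc_iff_Ioo using set_borel_integral_eq_integral(1)[OF s1]
    by (simp add: has_integral_integral)
  have "((\<lambda>x. ff b (g x) * g' x) has_integral I) {-pi/2<..<0}"
    unfolding I2 using set_borel_integral_eq_integral(1)[OF s2] by (simp add: has_integral_integral)
  hence "((\<lambda>x. G (g x)) has_integral I) {-pi/2<..<0}"
    by (rule has_integral_cong[THEN iffD1, rotated]) (auto simp: ident)
  hence h2: "((\<lambda>x. G (g x)) has_integral I) {-pi/2..0}" by (simp add: has_integral_Icc_iff_Ioo)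
  show ?thesis using h1 h2 unfolding g_def by blast
qed

end


context dgh begin

lemma periodL_eq:
  assumes b: "U0 < b" "b < U1"
  shows "((\<lambda>\<theta>. FF (sfun b \<theta>)) has_integral periodL C1 C2 C3 b / 2) {0..pi/2}"
proof -
  obtain I1 where I1: "(ff b has_integral I1) {MM b..ph2}" "((\<lambda>\<theta>. G (MM (sfun b \<theta>))) has_integral I1) {-pi/2..0}"
    using branch_minus[OF b] by blast
  obtain I2 where I2: "(ff b has_integral I2) {ph2..PP b}" "((\<lambda>\<theta>. G (PP (sfun b \<theta>))) has_integral I2) {0..pi/2}"
    using branch_plus[OF b] by blast
  have o: "MM b \<le> ph2" "ph2 \<le> PP b" using M_props[OF b] P_props[OF b(1)] by auto
  have "(ff b has_integral I1 + I2) {MM b..PP b}" by (rule has_integral_combine[OF o I1(1) I2(1)])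
  hence pe: "periodL C1 C2 C3 b = 2 * (I1 + I2)"
    unfolding periodL_def ff_def[abs_def] by (simp add: integral_unique)
  have "((\<lambda>\<theta>. G (MM (sfun b (-\<theta>)))) has_integral I1) {-0..-(-pi/2)}"
    using I1(2) by (subst has_integral_reflect_real) simp
  hence r: "((\<lambda>\<theta>. G (MM (sfun b \<theta>))) has_integral I1) {0..pi/2}" by (simp add: sfun_def)
  have hi: "((\<lambda>\<theta>. G (MM (sfun b \<theta>)) + G (PP (sfun b \<theta>))) has_integral I1 + I2) {0..pi/2}"
    by (rule has_integral_add[OF r I2(2)])
  have e: "periodL C1 C2 C3 b / 2 = I1 + I2" using pe by simp
  show ?thesis unfolding FF_def e using hi .
qed

lemma sfun_mono: "U0 < b1 \<Longrightarrow> b1 < b2 \<Longrightarrow> 0 < sin \<theta> \<Longrightarrow> sfun b1 \<theta> < sfun b2 \<theta>"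
  by (simp add: sfun_def)


lemma sin_sq_le: "(sin (\<theta>::real))^2 \<le> 1"
  using sin_cos_squared_add[of \<theta>] zero_le_power2[of "cos \<theta>"] by linarith

lemma sfun_in: "U0 < b \<Longrightarrow> 0 < sin \<theta> \<Longrightarrow> U0 < sfun b \<theta> \<and> sfun b \<theta> \<le> b"
proof -
  assume b: "U0 < b" and s: "0 < sin \<theta>"
  have "(b - U0) * (sin \<theta>)^2 \<le> (b - U0) * 1" using b sin_sq_le[of \<theta>] by (intro mult_left_mono) auto
  hence "(b - U0) * (sin \<theta>)^2 \<le> b - U0" by simp
  moreover have "0 < (b - U0) * (sin \<theta>)^2" using b s by simp
  ultimately show ?thesis unfolding sfun_def by linarith
qed

lemma period_less:
  assumes b: "U0 < b1" "b1 < b2" "b2 < U1"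
  shows "periodL C1 C2 C3 b1 < periodL C1 C2 C3 b2"
proof -
  define h1 where "h1 \<theta> = FF (sfun b1 \<theta>)" for \<theta>
  define h2 where "h2 \<theta> = FF (sfun b2 \<theta>)" for \<theta>
  have H1: "(h1 has_integral periodL C1 C2 C3 b1 / 2) {0..pi/2}"
    unfolding h1_def using periodL_eq[of b1] b by simp
  have H2: "(h2 has_integral periodL C1 C2 C3 b2 / 2) {0..pi/2}"
    unfolding h2_def using periodL_eq[of b2] b by simp
  have sin_pos: "0 < sin \<theta>" if "0 < \<theta>" "\<theta> \<le> pi/2" for \<theta>
    using that pi_gt_zero by (intro sin_gt_zero) auto
  have lt: "h1 \<theta> < h2 \<theta>" if "0 < \<theta>" "\<theta> \<le> pi/2" for \<theta>
  proof -
    have s: "0 < sin \<theta>" using sin_pos that by auto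
    show ?thesis unfolding h1_def h2_def
      using FF_mono[of "sfun b1 \<theta>" "sfun b2 \<theta>"] sfun_mono[of b1 b2 \<theta>] sfun_in[of b1 \<theta>] sfun_in[of b2 \<theta>] s b
      by simp
  qed
  have le: "h1 \<theta> \<le> h2 \<theta>" if "0 \<le> \<theta>" "\<theta> \<le> pi/2" for \<theta>
  proof (cases "\<theta> = 0")
    case True thus ?thesis by (simp add: h1_def h2_def sfun_def)
  next
    case False thus ?thesis using lt[of \<theta>] that by simp
  qed
  have i1: "h1 integrable_on {0..pi/2}" "h2 integrable_on {0..pi/2}" using H1 H2 by auto
  have sub1: "{0..pi/4} \<subseteq> {0..pi/2}" "{pi/4..pi/2} \<subseteq> {0..pi/2}" by auto
  have c: "continuous_on {pi/4..pi/2} h1" "continuous_on {pi/4..pi/2} h2"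
  proof -
    have cc: "isCont (\<lambda>\<theta>. FF (sfun b \<theta>)) \<theta>" if "U0 < b" "b < U1" "pi/4 \<le> \<theta>" "\<theta> \<le> pi/2" for b \<theta>
    proof -
      have "0 < sin \<theta>" using sin_pos[of \<theta>] that pi_gt_zero by simp
      hence "U0 < sfun b \<theta>" "sfun b \<theta> < U1" using sfun_in[of b \<theta>] that by auto
      thus ?thesis using isCont_o2[OF sfun_cont FF_cont] by blast
    qed
    show "continuous_on {pi/4..pi/2} h1" unfolding h1_def
      using cc[of b1] b by (intro continuous_at_imp_continuous_on) auto
    show "continuous_on {pi/4..pi/2} h2" unfolding h2_def
      using cc[of b2] b by (intro continuous_at_imp_continuous_on) auto
  qed
  have A: "integral {0..pi/4} h1 \<le> integral {0..pi/4} h2"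
    by (rule integral_le[OF integrable_subinterval_real[OF i1(1) sub1(1)] integrable_subinterval_real[OF i1(2) sub1(1)]])
       (use le pi_gt_zero in auto)
  have B: "integral {pi/4..pi/2} h1 < integral {pi/4..pi/2} h2"
    by (rule integral_less_real[OF c]) (use lt pi_gt_zero in auto)
  have "integral {0..pi/2} h1 = integral {0..pi/4} h1 + integral {pi/4..pi/2} h1"
    using Henstock_Kurzweil_Integration.integral_combine[where a=0 and c="pi/4" and b="pi/2" and f=h1] i1 pi_gt_zero by simp
  also have "\<dots> < integral {0..pi/4} h2 + integral {pi/4..pi/2} h2" using A B by simp
  also have "\<dots> = integral {0..pi/2} h2"
    using Henstock_Kurzweil_Integration.integral_combine[where a=0 and c="pi/4" and b="pi/2" and f=h2] i1 pi_gt_zero by simp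
  finally have "integral {0..pi/2} h1 < integral {0..pi/2} h2" .
  thus ?thesis using integral_unique[OF H1] integral_unique[OF H2] by simp
qed

end

theorem lemma3:
  fixes C1 C2 C3 :: real
  assumes "0 < C1" and "C1 \<le> C2"
    and "0 < C3" and "C3 < C3crit C1 C2"
  shows "strict_mono_on {bminus C1 C2 C3 <..< bplus C1 C2 C3} (periodL C1 C2 C3)"
proof -
  interpret dgh C1 C2 C3 using assms by unfold_locales
  show ?thesis
    by (rule strict_mono_onI) (auto simp: bminus_def bplus_def intro!: period_less)
qed


end
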